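(* Let $(\mathfrak{k},\partial)$ be a differential graded Lie algebra over a field of characteristic $0$, $\mathfrak{k}=\bigoplus_{i\le0}\mathfrak{k}^i$ with $\mathfrak{k}^i=0$ for $i\ll0$, and $\partial$ of degree $+1$. Assume there is a subspace $\mathfrak{l}$ of the center $\mathfrak{z}$ of $\mathfrak{k}$ such that $\partial$ vanishes on $\mathfrak{l}$ and the inclusion $\mathfrak{l}\hookrightarrow\mathfrak{k}$ induces an isomorphism in cohomology. Then: (1) for any even central element $X\in\mathfrak{z}$ with $\partial X=0$, the set of solutions $f\in\mathfrak{k}^-_{\mathrm{odd}}$ of $\partial f+\frac12[f,f]_{\mathfrak{k}}\equiv X\pmod{\mathfrak{l}}$ is a (nonempty) homogeneous space for the group $\exp(\mathfrak{k}^-_{\mathrm{even}})\times\mathfrak{l}^-_{\mathrm{odd}}$, where the first factor acts by gauge transformations and the second by translations; (2) the difference $\partial f+\frac12[f,f]_{\mathfrak{k}}-X\in\mathfrak{l}$ is independent of the solution $f$.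
   Context: $\mathfrak{k}^-=\bigoplus_{i<0}\mathfrak{k}^i$; "even/odd" refer to the parity of the degree $i$. $\mathfrak{k}^-_{\mathrm{even}}$ is an ordinary nilpotent Lie algebra; $\exp(\mathfrak{k}^-_{\mathrm{even}})$ denotes the corresponding group (the image of $s\mapsto\exp(s)=\sum_N s^N/N!$ in the degree completion of the enveloping algebra, with product given by the Campbell–Hausdorff formula). The gauge action on $\mathfrak{k}^-_{\mathrm{odd}}$ is $\exp(s).f=e^{\mathrm{ad}_s}f-j^R(\mathrm{ad}_s)\partial s$, where $j^R(z)=\frac{e^z-1}{z}$ and $\mathrm{ad}_s=[s,\cdot]_{\mathfrak{k}}$. Similarly $\mathfrak{l}^-_{\mathrm{odd}}=\mathfrak{l}\cap\mathfrak{k}^-_{\mathrm{odd}}$ (for the graded pieces), acting by translation $f\mapsto f+l$. *)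

theory Defs
  imports "HOL.Vector_Spaces"
begin

text \<open>A graded vector space over a field 'k is modelled as an ambient
 vector space 'v (with scalar multiplication scale) together with a family
 of subspaces K i (the homogeneous pieces k^i, i :: int).\<close>

definition gsign :: "int \<Rightarrow> 'k::field" where
  "gsign i = (if even i then 1 else -1)"

definition bounded_graded ::
  "('k::field \<Rightarrow> 'v::ab_group_add \<Rightarrow> 'v) \<Rightarrow> (int \<Rightarrow> 'v set) \<Rightarrow> nat \<Rightarrow> bool" where
  "bounded_graded scale K N \<longleftrightarrow>
     vector_space scale \<and>
     (\<forall>i. module.subspace scale (K i)) \<and>
     (\<forall>i. (i > 0 \<or> i < - int N) \<longrightarrow> K i = {0}) \<and>
     (\<forall>v. \<exists>!c. (\<forall>i. c i \<in> K i) \<and> v = (\<Sum>i\<in>{- int N..0}. c i))"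

definition dgla ::
  "('k::field \<Rightarrow> 'v::ab_group_add \<Rightarrow> 'v) \<Rightarrow> (int \<Rightarrow> 'v set) \<Rightarrow> nat
     \<Rightarrow> ('v \<Rightarrow> 'v \<Rightarrow> 'v) \<Rightarrow> ('v \<Rightarrow> 'v) \<Rightarrow> bool" where
  "dgla scale K N br d \<longleftrightarrow>
     bounded_graded scale K N \<and>
     (\<forall>x. Vector_Spaces.linear scale scale (br x)) \<and>
     (\<forall>y. Vector_Spaces.linear scale scale (\<lambda>x. br x y)) \<and>
     (\<forall>i j x y. x \<in> K i \<longrightarrow> y \<in> K j \<longrightarrow> br x y \<in> K (i + j)) \<and>
     (\<forall>i j x y. x \<in> K i \<longrightarrow> y \<in> K j \<longrightarrow>
        br x y = - scale (gsign (i * j)) (br y x)) \<and>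
     (\<forall>i j x y z. x \<in> K i \<longrightarrow> y \<in> K j \<longrightarrow>
        br x (br y z) = br (br x y) z + scale (gsign (i * j)) (br y (br x z))) \<and>
     Vector_Spaces.linear scale scale d \<and>
     (\<forall>i x. x \<in> K i \<longrightarrow> d x \<in> K (i + 1)) \<and>
     (\<forall>x. d (d x) = 0) \<and>
     (\<forall>i x y. x \<in> K i \<longrightarrow> d (br x y) = br (d x) y + scale (gsign i) (br x (d y)))"

definition graded_part ::
  "('k::field \<Rightarrow> 'v::ab_group_add \<Rightarrow> 'v) \<Rightarrow> (int \<Rightarrow> 'v set) \<Rightarrow> (int \<Rightarrow> bool) \<Rightarrow> 'v set" where
  "graded_part scale K P = module.span scale (\<Union>i\<in>{i. P i}. K i)"

definition center :: "('v::zero \<Rightarrow> 'v \<Rightarrow> 'v) \<Rightarrow> 'v set" where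
  "center br = {x. \<forall>y. br x y = 0}"

text \<open>A subspace L with zero differential which is graded (the span of its
 graded pieces L \<inter> K i), and such that the inclusion into (k, d) induces an
 isomorphism on cohomology in every degree: since the differential of L is
 zero, H^i(L) = L \<inter> K i, and H^i(k) = (ker d \<inter> K i) / d(K (i-1)).\<close>

definition quasi_iso_incl ::
  "('k::field \<Rightarrow> 'v::ab_group_add \<Rightarrow> 'v) \<Rightarrow> (int \<Rightarrow> 'v set) \<Rightarrow> ('v \<Rightarrow> 'v) \<Rightarrow> 'v set \<Rightarrow> bool" where
  "quasi_iso_incl scale K d L \<longleftrightarrow>
     (\<forall>i x. x \<in> L \<inter> K i \<longrightarrow> x \<in> d ` K (i - 1) \<longrightarrow> x = 0) \<and>
     (\<forall>i y. y \<in> K i \<longrightarrow> d y = 0 \<longrightarrow> (\<exists>x \<in> L \<inter> K i. y - x \<in> d ` K (i - 1)))"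

text \<open>Gauge action exp(s).f = e^{ad_s} f - j^R(ad_s)(d s), j^R(z) = (e^z - 1)/z,
 with the power series truncated at M; for s in k^-_even and M > N all
 omitted terms vanish (ad_s lowers degree by at least 2).\<close>

definition gauge_act ::
  "('k::field_char_0 \<Rightarrow> 'v::ab_group_add \<Rightarrow> 'v) \<Rightarrow> ('v \<Rightarrow> 'v \<Rightarrow> 'v) \<Rightarrow> ('v \<Rightarrow> 'v)
     \<Rightarrow> nat \<Rightarrow> 'v \<Rightarrow> 'v \<Rightarrow> 'v" where
  "gauge_act scale br d M s f =
     (\<Sum>n<M. scale (1 / of_nat (fact n)) ((br s ^^ n) f))
     - (\<Sum>n<M. scale (1 / of_nat (fact (Suc n))) ((br s ^^ n) (d s)))"

end

theory Submission
  imports Defs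
begin


locale DG =
  fixes scale :: "'k::field_char_0 \<Rightarrow> 'v::ab_group_add \<Rightarrow> 'v"
    and K :: "int \<Rightarrow> 'v set" and N :: nat
    and br :: "'v \<Rightarrow> 'v \<Rightarrow> 'v" and d :: "'v \<Rightarrow> 'v"
  assumes dg: "dgla scale K N br d"
begin

lemma bg: "bounded_graded scale K N" using dg unfolding dgla_def by (elim conjE) assumption
lemma vs: "vector_space scale" using bg unfolding bounded_graded_def by (elim conjE) assumption

sublocale vector_space scale by (rule vs)

lemma ax_subK: "\<forall>i. subspace (K i)" using bg unfolding bounded_graded_def by (elim conjE) assumption
lemma subK: "subspace (K i)" using ax_subK by blast
lemma ax_Kzero: "\<forall>i. (i > 0 \<or> i < - int N) \<longrightarrow> K i = {0}" using bg unfolding bounded_graded_def by (elim conjE) assumption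
lemma Kzero: "i > 0 \<or> i < - int N \<Longrightarrow> K i = {0}" using ax_Kzero by blast
lemma ax_decomp: "\<forall>v. \<exists>!c. (\<forall>i. c i \<in> K i) \<and> v = (\<Sum>i\<in>{- int N..0}. c i)"
  using bg unfolding bounded_graded_def by (elim conjE) assumption
lemma decomp: "\<exists>!c. (\<forall>i. c i \<in> K i) \<and> v = (\<Sum>i\<in>{- int N..0}. c i)"
  using ax_decomp by (rule spec)
lemma ax_br_lin1: "\<forall>x. Vector_Spaces.linear scale scale (br x)" using dg unfolding dgla_def by (elim conjE) assumption
lemma br_lin1: "Vector_Spaces.linear scale scale (br x)" using ax_br_lin1 by (rule spec)
lemma ax_br_lin2: "\<forall>y. Vector_Spaces.linear scale scale (\<lambda>x. br x y)" using dg unfolding dgla_def by (elim conjE) assumption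
lemma br_lin2: "Vector_Spaces.linear scale scale (\<lambda>x. br x y)" using ax_br_lin2 by (rule spec)
lemma ax_br_deg: "\<forall>i j x y. x \<in> K i \<longrightarrow> y \<in> K j \<longrightarrow> br x y \<in> K (i + j)" using dg unfolding dgla_def by (elim conjE) assumption
lemma br_deg: "x \<in> K i \<Longrightarrow> y \<in> K j \<Longrightarrow> br x y \<in> K (i + j)" using ax_br_deg by blast
lemma ax_br_anti: "\<forall>i j x y. x \<in> K i \<longrightarrow> y \<in> K j \<longrightarrow> br x y = - scale (gsign (i * j)) (br y x)"
  using dg unfolding dgla_def by (elim conjE) assumption
lemma br_anti: "x \<in> K i \<Longrightarrow> y \<in> K j \<Longrightarrow> br x y = - scale (gsign (i * j)) (br y x)"
  using ax_br_anti by blast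
lemma ax_jacobi: "\<forall>i j x y z. x \<in> K i \<longrightarrow> y \<in> K j \<longrightarrow>
        br x (br y z) = br (br x y) z + scale (gsign (i * j)) (br y (br x z))"
  using dg unfolding dgla_def by (elim conjE) assumption
lemma jacobi: "x \<in> K i \<Longrightarrow> y \<in> K j \<Longrightarrow>
        br x (br y z) = br (br x y) z + scale (gsign (i * j)) (br y (br x z))"
  using ax_jacobi by blast
lemma d_lin: "Vector_Spaces.linear scale scale d" using dg unfolding dgla_def by (elim conjE) assumption
lemma ax_d_deg: "\<forall>i x. x \<in> K i \<longrightarrow> d x \<in> K (i + 1)" using dg unfolding dgla_def by (elim conjE) assumption
lemma d_deg: "x \<in> K i \<Longrightarrow> d x \<in> K (i + 1)" using ax_d_deg by blast
lemma ax_dd: "\<forall>x. d (d x) = 0" using dg unfolding dgla_def by (elim conjE) assumption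
lemma dd[simp]: "d (d x) = 0" using ax_dd by blast
lemma ax_leib: "\<forall>i x y. x \<in> K i \<longrightarrow> d (br x y) = br (d x) y + scale (gsign i) (br x (d y))"
  using dg unfolding dgla_def by (elim conjE) assumption
lemma leib: "x \<in> K i \<Longrightarrow> d (br x y) = br (d x) y + scale (gsign i) (br x (d y))"
  using ax_leib by blast

lemma br_add1: "br x (y + z) = br x y + br x z" using br_lin1[of x] by (simp add: linear_iff)
lemma br_add2: "br (x + y) z = br x z + br y z" using br_lin2[of z] by (simp add: linear_iff)
lemma br_scale1: "br x (scale c y) = scale c (br x y)" using br_lin1[of x] by (simp add: linear_iff)
lemma br_scale2: "br (scale c x) y = scale c (br x y)" using br_lin2[of y] by (simp add: linear_iff)
lemma br_01[simp]: "br x 0 = 0" using linear.axioms(3)[OF br_lin1[of x]] module_hom.zero by blast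
lemma br_02[simp]: "br 0 x = 0" using linear.axioms(3)[OF br_lin2[of x]] module_hom.zero by fastforce
lemma br_diff1: "br x (y - z) = br x y - br x z" using linear.axioms(3)[OF br_lin1[of x]] module_hom.diff by blast
lemma br_diff2: "br (x - y) z = br x z - br y z"
  using module_hom.diff[OF linear.axioms(3)[OF br_lin2[of z]]] by blast
lemma br_neg1: "br x (- y) = - br x y" using linear.axioms(3)[OF br_lin1[of x]] module_hom.neg by blast
lemma br_neg2: "br (- x) z = - br x z"
  using module_hom.neg[OF linear.axioms(3)[OF br_lin2[of z]]] by blast
lemma br_sum1: "br x (sum g A) = (\<Sum>a\<in>A. br x (g a))" using linear.axioms(3)[OF br_lin1[of x]] module_hom.sum by blast
lemma br_sum2: "br (sum g A) z = (\<Sum>a\<in>A. br (g a) z)"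
  using module_hom.sum[OF linear.axioms(3)[OF br_lin2[of z]]] by blast
lemma d_add: "d (x + y) = d x + d y" using d_lin by (simp add: linear_iff)
lemma d_scale: "d (scale c x) = scale c (d x)" using d_lin by (simp add: linear_iff)
lemma d_0[simp]: "d 0 = 0" using linear.axioms(3)[OF d_lin] module_hom.zero by blast
lemma d_diff: "d (x - y) = d x - d y" using linear.axioms(3)[OF d_lin] module_hom.diff by blast
lemma d_neg: "d (- x) = - d x" using linear.axioms(3)[OF d_lin] module_hom.neg by blast
lemma d_sum: "d (sum g A) = (\<Sum>a\<in>A. d (g a))" using linear.axioms(3)[OF d_lin] module_hom.sum by blast

lemmas br_simps = br_add1 br_add2 br_scale1 br_scale2 br_diff1 br_diff2 br_neg1 br_neg2 d_add d_scale d_diff d_neg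

end


context DG begin

abbreviation "R \<equiv> {- int N..0}"

definition pic :: "'v \<Rightarrow> int \<Rightarrow> 'v" where
  "pic v = (THE c. (\<forall>i. c i \<in> K i) \<and> v = (\<Sum>i\<in>R. c i))"
definition pi :: "int \<Rightarrow> 'v \<Rightarrow> 'v" where "pi i v = pic v i"

lemma pic_spec: "(\<forall>i. pic v i \<in> K i) \<and> v = (\<Sum>i\<in>R. pic v i)"
  unfolding pic_def by (rule theI'[OF decomp])

lemma pi_K: "pi i v \<in> K i" using pic_spec unfolding pi_def by blast
lemma decomp_sum: "v = (\<Sum>i\<in>R. pi i v)" using pic_spec unfolding pi_def by blast

lemma pi_unique: assumes "\<forall>i. c i \<in> K i" "v = (\<Sum>i\<in>R. c i)" shows "pi i v = c i"
proof -
  have "pic v = c" unfolding pic_def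
    by (rule the1_equality[OF decomp]) (use assms in blast)
  then show ?thesis unfolding pi_def by simp
qed

lemma K0: "0 \<in> K i" using subK subspace_0 by blast

lemma pi_out: "i \<notin> R \<Longrightarrow> pi i v = 0"
  using pi_K[of i v] Kzero[of i] by auto

lemma K_out: "i \<notin> R \<Longrightarrow> x \<in> K i \<Longrightarrow> x = 0"
  using Kzero[of i] by auto

lemma pi_K_single: assumes "x \<in> K j" shows "pi i x = (if i = j then x else 0)"
proof (cases "j \<in> R")
  case True
  have "pi i x = (\<lambda>i. if i = j then x else 0) i"
    by (rule pi_unique) (use assms K0 True in auto)
  then show ?thesis by simp
next
  case False
  then have "x = 0" using K_out assms by blast
  moreover have "pi i 0 = 0" by (rule trans[OF pi_unique[of "\<lambda>_. 0"]]) (auto simp: K0)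
  ultimately show ?thesis by simp
qed

lemma pi_add: "pi i (x + y) = pi i x + pi i y"
  by (rule pi_unique[of "\<lambda>i. pi i x + pi i y"])
     (auto simp: pi_K subK subspace_add sum.distrib decomp_sum[symmetric])

lemma pi_scale: "pi i (scale c x) = scale c (pi i x)"
  by (rule pi_unique[of "\<lambda>i. scale c (pi i x)"])
     (auto simp: pi_K subK subspace_scale scale_sum_right[symmetric] decomp_sum[symmetric])

lemma pi_lin: "Vector_Spaces.linear scale scale (pi i)"
  by (simp add: linear_iff vs pi_add pi_scale)

lemma pi_0[simp]: "pi i 0 = 0" using linear.axioms(3)[OF pi_lin] module_hom.zero by blast
lemma pi_diff: "pi i (x - y) = pi i x - pi i y" using linear.axioms(3)[OF pi_lin] module_hom.diff by blast
lemma pi_neg: "pi i (- x) = - pi i x" using linear.axioms(3)[OF pi_lin] module_hom.neg by blast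
lemma pi_sum: "pi i (sum g A) = (\<Sum>a\<in>A. pi i (g a))" using linear.axioms(3)[OF pi_lin] module_hom.sum by blast

lemma pi_ext: assumes "\<And>i. pi i v = pi i w" shows "v = w"
proof -
  have "(\<Sum>i\<in>R. pi i v) = (\<Sum>i\<in>R. pi i w)" using assms by simp
  then show ?thesis by (simp only: decomp_sum[symmetric])
qed

lemma pi_pi: "pi j (pi i v) = (if j = i then pi i v else 0)"
  by (rule pi_K_single[OF pi_K])

definition GP :: "(int \<Rightarrow> bool) \<Rightarrow> 'v set" where
  "GP P = {v. \<forall>i. \<not> P i \<longrightarrow> pi i v = 0}"

lemma GP_subspace: "subspace (GP P)"
  by (rule subspaceI) (auto simp: GP_def pi_add pi_scale)

lemma K_GP: "P i \<Longrightarrow> K i \<subseteq> GP P"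
  by (auto simp: GP_def pi_K_single)

lemma GP_piI: "v \<in> GP P \<Longrightarrow> \<not> P i \<Longrightarrow> pi i v = 0" by (simp add: GP_def)

lemma GP_mono: "(\<And>i. P i \<Longrightarrow> Q i) \<Longrightarrow> v \<in> GP P \<Longrightarrow> v \<in> GP Q"
  by (auto simp: GP_def)

lemma GP_decomp: assumes "v \<in> GP P" shows "v = (\<Sum>i\<in>R. if P i then pi i v else 0)"
proof -
  have "(\<Sum>i\<in>R. if P i then pi i v else 0) = (\<Sum>i\<in>R. pi i v)"
    by (rule sum.cong) (use assms in \<open>auto simp: GP_def\<close>)
  then show ?thesis by (simp only: decomp_sum[symmetric])
qed

lemma GP_eq: "graded_part scale K P = GP P"
proof
  show "graded_part scale K P \<subseteq> GP P" unfolding graded_part_def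
    by (rule span_minimal) (use K_GP GP_subspace in auto)
next
  show "GP P \<subseteq> graded_part scale K P"
  proof
    fix v assume v: "v \<in> GP P"
    have "(\<Sum>i\<in>R. if P i then pi i v else 0) \<in> graded_part scale K P"
      unfolding graded_part_def
      by (rule subspace_sum) (auto intro!: span_base simp: pi_K span_zero)
    then show "v \<in> graded_part scale K P" using GP_decomp[OF v] by simp
  qed
qed

lemma GP_top: "GP (\<lambda>j. j \<le> 0) = UNIV"
  by (auto simp: GP_def pi_out)

lemma GP_low: assumes "v \<in> GP P" "\<And>i. i \<in> R \<Longrightarrow> \<not> P i" shows "v = 0"
proof (rule pi_ext)
  fix i show "pi i v = pi i 0"
    by (cases "i \<in> R") (use assms in \<open>auto simp: GP_def pi_out\<close>)
qed

lemma br_decomp: "br x y = (\<Sum>i\<in>R. \<Sum>j\<in>R. br (pi i x) (pi j y))"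
proof -
  have "br x y = br (\<Sum>i\<in>R. pi i x) (\<Sum>j\<in>R. pi j y)"
    by (simp only: decomp_sum[symmetric])
  also have "\<dots> = (\<Sum>i\<in>R. \<Sum>j\<in>R. br (pi i x) (pi j y))"
    by (simp only: br_sum2) (simp only: br_sum1)
  finally show ?thesis .
qed

lemma br_GP: assumes "\<And>i j. P i \<Longrightarrow> Q j \<Longrightarrow> T (i + j)" "x \<in> GP P" "y \<in> GP Q"
  shows "br x y \<in> GP T"
proof -
  have "(\<Sum>i\<in>R. \<Sum>j\<in>R. br (pi i x) (pi j y)) \<in> GP T"
  proof (intro subspace_sum[OF GP_subspace])
    fix i j
    show "br (pi i x) (pi j y) \<in> GP T"
    proof (cases "P i \<and> Q j")
      case True
      have "br (pi i x) (pi j y) \<in> K (i + j)" by (rule br_deg[OF pi_K pi_K])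
      moreover have "T (i + j)" using assms(1) True by blast
      ultimately show ?thesis using K_GP[of T "i+j"] by blast
    next
      case False
      then have "pi i x = 0 \<or> pi j y = 0" using assms(2,3) GP_piI by blast
      then show ?thesis using subspace_0[OF GP_subspace] by (elim disjE) simp_all
    qed
  qed
  then show ?thesis using br_decomp[of x y] by simp
qed

lemma d_GP: assumes "\<And>i. P i \<Longrightarrow> Q (i + 1)" "x \<in> GP P" shows "d x \<in> GP Q"
proof -
  have "(\<Sum>i\<in>R. d (pi i x)) \<in> GP Q"
  proof (intro subspace_sum[OF GP_subspace])
    fix i show "d (pi i x) \<in> GP Q"
    proof (cases "P i")
      case True
      have "d (pi i x) \<in> K (i + 1)" by (rule d_deg[OF pi_K])
      moreover have "Q (i + 1)" using assms(1) True by blast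
      ultimately show ?thesis using K_GP[of Q "i+1"] by blast
    next
      case False
      then have "pi i x = 0" using assms(2) GP_piI by blast
      then show ?thesis using subspace_0[OF GP_subspace] by simp
    qed
  qed
  then show ?thesis by (simp only: d_sum[symmetric] decomp_sum[symmetric])
qed

lemma pi_d: "pi (i + 1) (d v) = d (pi i v)"
proof -
  have "pi (i + 1) (d v) = (\<Sum>j\<in>R. pi (i+1) (d (pi j v)))"
    by (simp only: d_sum[symmetric] pi_sum[symmetric] decomp_sum[symmetric])
  also have "\<dots> = (\<Sum>j\<in>R. if j = i then d (pi i v) else 0)"
    by (rule sum.cong) (auto simp: pi_K_single[OF d_deg[OF pi_K]])
  also have "\<dots> = d (pi i v)"
    by (cases "i \<in> R") (auto simp: pi_out)
  finally show ?thesis .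
qed

end


lemma gsign_even[simp]: "even i \<Longrightarrow> gsign i = 1" by (simp add: gsign_def)
lemma gsign_odd[simp]: "odd i \<Longrightarrow> gsign i = -1" by (simp add: gsign_def)

context DG begin

lemma dec_l: "br x w = (\<Sum>i\<in>R. br (pi i x) w)"
  by (simp only: br_sum2[symmetric] decomp_sum[symmetric])
lemma dec_r: "br w x = (\<Sum>i\<in>R. br w (pi i x))"
  by (simp only: br_sum1[symmetric] decomp_sum[symmetric])
lemma dec_d: "d x = (\<Sum>i\<in>R. d (pi i x))"
  by (simp only: d_sum[symmetric] decomp_sum[symmetric])

lemma anti_even: assumes "x \<in> GP even" shows "br y x = - br x y"
proof -
  have t: "br (pi j y) (pi i x) = - br (pi i x) (pi j y)" for i j
  proof (cases "even i")
    case True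
    then show ?thesis using br_anti[OF pi_K pi_K, of j y i x] by simp
  next
    case False
    then show ?thesis using assms GP_piI by fastforce
  qed
  have "br y x = (\<Sum>j\<in>R. \<Sum>i\<in>R. br (pi j y) (pi i x))" by (rule br_decomp)
  also have "\<dots> = (\<Sum>j\<in>R. \<Sum>i\<in>R. - br (pi i x) (pi j y))" by (simp only: t)
  also have "\<dots> = - (\<Sum>i\<in>R. \<Sum>j\<in>R. br (pi i x) (pi j y))"
    by (subst sum.swap) (simp add: sum_negf)
  also have "\<dots> = - br x y" by (simp only: br_decomp[of x y, symmetric])
  finally show ?thesis .
qed

lemma sym_odd: assumes "x \<in> GP odd" "y \<in> GP odd" shows "br x y = br y x"
proof -
  have t: "br (pi i x) (pi j y) = br (pi j y) (pi i x)" for i j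
  proof (cases "odd i \<and> odd j")
    case True
    then show ?thesis using br_anti[OF pi_K pi_K, of i x j y] by simp
  next
    case False
    then show ?thesis using assms GP_piI by fastforce
  qed
  have "br x y = (\<Sum>i\<in>R. \<Sum>j\<in>R. br (pi i x) (pi j y))" by (rule br_decomp)
  also have "\<dots> = (\<Sum>i\<in>R. \<Sum>j\<in>R. br (pi j y) (pi i x))" by (simp only: t)
  also have "\<dots> = (\<Sum>j\<in>R. \<Sum>i\<in>R. br (pi j y) (pi i x))" by (rule sum.swap)
  also have "\<dots> = br y x" by (simp only: br_decomp[of y x, symmetric])
  finally show ?thesis .
qed

lemma jac_gen: assumes "x \<in> GP P" "y \<in> GP Q" "\<And>i j. P i \<Longrightarrow> Q j \<Longrightarrow> gsign (i * j) = (c::'k)"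
  shows "br x (br y z) = br (br x y) z + scale c (br y (br x z))"
proof -
  have t: "br (pi i x) (br (pi j y) z) = br (br (pi i x) (pi j y)) z + scale c (br (pi j y) (br (pi i x) z))" for i j
  proof (cases "P i \<and> Q j")
    case True
    then show ?thesis using jacobi[OF pi_K pi_K, of i x j y z] assms(3) by simp
  next
    case False
    then have "pi i x = 0 \<or> pi j y = 0" using assms(1,2) GP_piI by blast
    then show ?thesis by (elim disjE) simp_all
  qed
  have "br x (br y z) = (\<Sum>i\<in>R. \<Sum>j\<in>R. br (pi i x) (br (pi j y) z))"
    by (simp only: br_sum1[symmetric] br_sum2[symmetric] decomp_sum[symmetric])
  also have "\<dots> = (\<Sum>i\<in>R. \<Sum>j\<in>R. br (br (pi i x) (pi j y)) z + scale c (br (pi j y) (br (pi i x) z)))"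
    by (simp only: t)
  also have "\<dots> = (\<Sum>i\<in>R. \<Sum>j\<in>R. br (br (pi i x) (pi j y)) z) + scale c (\<Sum>j\<in>R. \<Sum>i\<in>R. br (pi j y) (br (pi i x) z))"
    by (subst (2) sum.swap) (simp add: sum.distrib scale_sum_right)
  also have "\<dots> = br (br x y) z + scale c (br y (br x z))"
    by (simp only: br_sum1[symmetric] br_sum2[symmetric] decomp_sum[symmetric])
  finally show ?thesis .
qed

lemma jac_even: "s \<in> GP even \<Longrightarrow> br s (br x z) = br (br s x) z + br x (br s z)"
  using jac_gen[of s even x "\<lambda>_. True" 1 z] by (simp add: GP_top[unfolded GP_def] GP_def)

lemma jac_odd: "x \<in> GP odd \<Longrightarrow> y \<in> GP odd \<Longrightarrow> br x (br y z) = br (br x y) z - br y (br x z)"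
  using jac_gen[of x odd y odd "-1" z] by simp

lemma leib_gen: assumes "x \<in> GP P" "\<And>i. P i \<Longrightarrow> gsign i = (c::'k)"
  shows "d (br x y) = br (d x) y + scale c (br x (d y))"
proof -
  have t: "d (br (pi i x) y) = br (d (pi i x)) y + scale c (br (pi i x) (d y))" for i
  proof (cases "P i")
    case True
    then show ?thesis using leib[OF pi_K, of i x y] assms(2) by simp
  next
    case False
    then show ?thesis using assms(1) GP_piI by fastforce
  qed
  have "d (br x y) = (\<Sum>i\<in>R. d (br (pi i x) y))"
    by (simp only: d_sum[symmetric] br_sum2[symmetric] decomp_sum[symmetric])
  also have "\<dots> = (\<Sum>i\<in>R. br (d (pi i x)) y + scale c (br (pi i x) (d y)))" by (simp only: t)
  also have "\<dots> = br (d x) y + scale c (br x (d y))"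
    by (simp only: sum.distrib scale_sum_right[symmetric] d_sum[symmetric] br_sum2[symmetric] decomp_sum[symmetric])
  finally show ?thesis .
qed

lemma leib_even: "s \<in> GP even \<Longrightarrow> d (br s y) = br (d s) y + br s (d y)"
  using leib_gen[of s even 1 y] by simp

lemma leib_odd: "x \<in> GP odd \<Longrightarrow> d (br x y) = br (d x) y - br x (d y)"
  using leib_gen[of x odd "-1" y] by simp

lemma three_zero: fixes w :: 'v assumes "w + w + w = 0" shows "w = 0"
proof -
  have "scale (1+1+1) w = w + w + w" by (simp only: scale_left_distrib scale_one)
  then have "scale 3 w = 0" using assms by simp
  then have "scale (1/3) (scale 3 w) = 0" by simp
  then show ?thesis by simp
qed

lemma triple_odd: assumes "x \<in> GP odd" shows "br x (br x x) = 0"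
proof -
  have e: "br x x \<in> GP even" by (rule br_GP[OF _ assms assms]) auto
  have 1: "br x (br x x) = br (br x x) x - br x (br x x)" by (rule jac_odd[OF assms assms])
  have 2: "br x (br x x) = - br (br x x) x" by (rule anti_even[OF e])
  from 1 have 3: "br x (br x x) + br x (br x x) = br (br x x) x" by (simp add: eq_diff_eq)
  have "br x (br x x) + br x (br x x) + br x (br x x) = br (br x x) x + br x (br x x)"
    by (simp only: 3)
  also have "\<dots> = 0" using 2 by simp
  finally have "br x (br x x) + br x (br x x) + br x (br x x) = 0" .
  then show ?thesis by (rule three_zero)
qed

end


lemma sum_refl: "(\<Sum>a\<le>(n::nat). g (n - a)) = (\<Sum>a\<le>n. g a)"
  by (rule sum.reindex_bij_witness[where i="\<lambda>a. n-a" and j="\<lambda>a. n-a"]) auto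

context DG begin

abbreviation "ko \<equiv> GP (\<lambda>i. i < 0 \<and> odd i)"
abbreviation "ke \<equiv> GP (\<lambda>i. i < 0 \<and> even i)"
abbreviation "Fil m \<equiv> GP (\<lambda>j. j \<le> m)"

lemma neg_even: fixes i :: int assumes "i < 0" "even i" shows "i \<le> -2"
proof -
  obtain k where "i = 2 * k" using assms(2) by (elim evenE)
  then show ?thesis using assms(1) by simp
qed

lemma neg_odd: fixes i :: int assumes "i < 0" "odd i" shows "i \<le> -1"
  using assms by simp

lemma ke_Fil: assumes "s \<in> ke" shows "s \<in> Fil (-2)"
proof (rule GP_mono[OF _ assms])
  fix i :: int assume "i < 0 \<and> even i" then show "i \<le> -2" using neg_even by blast
qed

lemma ko_Fil: assumes "s \<in> ko" shows "s \<in> Fil (-1)"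
  by (rule GP_mono[OF _ assms]) simp

lemma ke_even: "s \<in> ke \<Longrightarrow> s \<in> GP even" by (rule GP_mono) auto
lemma ko_odd: "s \<in> ko \<Longrightarrow> s \<in> GP odd" by (rule GP_mono) auto

lemma ke_ko: "s \<in> ke \<Longrightarrow> x \<in> ko \<Longrightarrow> br s x \<in> ko"
  by (rule br_GP) auto
lemma d_ke: "s \<in> ke \<Longrightarrow> d s \<in> ko"
  by (rule d_GP) auto
lemma pow_ko: "s \<in> ke \<Longrightarrow> x \<in> ko \<Longrightarrow> (br s ^^ n) x \<in> ko"
  by (induction n) (auto intro: ke_ko)

lemma pow_Fil: assumes "s \<in> Fil (-2)" shows "(br s ^^ n) x \<in> Fil (- 2 * int n)"
proof (induction n)
  case 0 then show ?case using GP_top by simp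
next
  case (Suc n)
  have "br s ((br s ^^ n) x) \<in> Fil (- 2 * int (Suc n))"
    by (rule br_GP[OF _ assms Suc]) auto
  then show ?case by simp
qed

lemma pow_zero: assumes "s \<in> Fil (-2)" "n \<ge> Suc N" shows "(br s ^^ n) x = 0"
  by (rule GP_low[OF pow_Fil[OF assms(1)]]) (use assms(2) in auto)

definition hh :: "'v \<Rightarrow> 'v \<Rightarrow> nat \<Rightarrow> 'v" where
  "hh s f n = scale (1 / of_nat (fact n)) ((br s ^^ n) f)
     - (case n of 0 \<Rightarrow> 0 | Suc k \<Rightarrow> scale (1 / of_nat (fact n)) ((br s ^^ k) (d s)))"

definition GG :: "'v \<Rightarrow> 'v \<Rightarrow> nat \<Rightarrow> 'v" where
  "GG s f n = d (hh s f n) + scale (1/2) (\<Sum>a\<le>n. br (hh s f a) (hh s f (n - a)))"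

definition curv :: "'v \<Rightarrow> 'v" where "curv x = d x + scale (1/2) (br x x)"

lemma hh0: "hh s f 0 = f" by (simp add: hh_def)

lemma fact_coef: "(of_nat (Suc n) :: 'k) * (1 / of_nat (fact (Suc n))) = 1 / of_nat (fact n)"
proof -
  have g: "(x::'k) \<noteq> 0 \<Longrightarrow> y \<noteq> 0 \<Longrightarrow> x * (1 / (x * y)) = 1 / y" for x y by (simp add: field_simps)
  have e: "(of_nat (fact (Suc n)) :: 'k) = of_nat (Suc n) * of_nat (fact n)" by (simp only: fact_Suc of_nat_mult of_nat_id)
  show ?thesis unfolding e by (rule g) (simp_all only: of_nat_neq_0 of_nat_eq_0_iff fact_nonzero not_False_eq_True)
qed

lemma hh_rec: "scale (of_nat (Suc n)) (hh s f (Suc n)) = br s (hh s f n) - (if n = 0 then d s else 0)"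
proof -
  have "scale (of_nat (Suc n)) (hh s f (Suc n)) =
     scale (1 / of_nat (fact n)) (br s ((br s ^^ n) f)) - scale (1 / of_nat (fact n)) ((br s ^^ n) (d s))"
    by (simp only: hh_def scale_right_diff_distrib scale_scale fact_coef nat.case funpow.simps o_apply)
  also have "\<dots> = br s (hh s f n) - (if n = 0 then d s else 0)"
    by (cases n) (simp_all add: hh_def br_scale1 br_diff1)
  finally show ?thesis .
qed

lemma hh_ko: "s \<in> ke \<Longrightarrow> f \<in> ko \<Longrightarrow> hh s f n \<in> ko"
  unfolding hh_def
  by (cases n) (auto intro!: subspace_diff[OF GP_subspace] subspace_scale[OF GP_subspace]
        pow_ko d_ke subspace_0[OF GP_subspace] ke_ko)

lemma hh_zero: assumes "s \<in> ke" "n > Suc N" shows "hh s f n = 0"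
proof -
  obtain k where n: "n = Suc k" "k \<ge> Suc N" using assms(2) by (cases n) auto
  show ?thesis unfolding hh_def n using pow_zero[OF ke_Fil[OF assms(1)]] n by simp
qed

lemma gauge_sum: assumes "s \<in> ke"
  shows "gauge_act scale br d (Suc N) s f = (\<Sum>n\<le>Suc N. hh s f n)"
proof -
  have z: "(br s ^^ Suc N) f = 0" by (rule pow_zero[OF ke_Fil[OF assms]]) simp
  have "(\<Sum>n\<le>Suc N. hh s f n) = (\<Sum>n\<le>Suc N. scale (1 / of_nat (fact n)) ((br s ^^ n) f))
     - (\<Sum>n\<le>Suc N. (case n of 0 \<Rightarrow> 0 | Suc k \<Rightarrow> scale (1 / of_nat (fact n)) ((br s ^^ k) (d s))))"
    by (simp add: hh_def sum_subtractf)
  also have "(\<Sum>n\<le>Suc N. scale (1 / of_nat (fact n)) ((br s ^^ n) f)) = (\<Sum>n<Suc N. scale (1 / of_nat (fact n)) ((br s ^^ n) f))"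
    using z by (simp add: lessThan_Suc_atMost[symmetric])
  also have "(\<Sum>n\<le>Suc N. (case n of 0 \<Rightarrow> 0 | Suc k \<Rightarrow> scale (1 / of_nat (fact n)) ((br s ^^ k) (d s))))
      = (\<Sum>n<Suc N. scale (1 / of_nat (fact (Suc n))) ((br s ^^ n) (d s)))"
    by (subst sum.atMost_shift) simp
  finally show ?thesis unfolding gauge_act_def by simp
qed

end


context DG begin

lemma scale_two: "scale 2 x = x + x"
proof -
  have "scale (1+1) x = x + x" by (simp only: scale_left_distrib scale_one)
  then show ?thesis by simp
qed

lemma half_two: "scale (1/2) (x + x) = x"
proof -
  have "scale (1/2) (x + x) = scale (1/2) (scale 2 x)" by (simp only: scale_two)
  also have "\<dots> = x" by simp
  finally show ?thesis .
qed

context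
  fixes s f
  assumes s: "s \<in> ke" and f: "f \<in> ko"
begin

abbreviation "h \<equiv> hh s f"

lemma h_ko: "h n \<in> ko" by (rule hh_ko[OF s f])
lemma h_odd: "h n \<in> GP odd" by (rule ko_odd[OF h_ko])
lemma s_even: "s \<in> GP even" by (rule ke_even[OF s])
lemma bsh_odd: "br s (h n) \<in> GP odd" by (rule ko_odd[OF ke_ko[OF s h_ko]])

lemma S1: "scale (of_nat (Suc n)) (\<Sum>a\<le>Suc n. br (h a) (h (Suc n - a)))
   = scale 2 (\<Sum>a\<le>n. br (scale (of_nat (Suc a)) (h (Suc a))) (h (n - a)))"
proof -
  define m where "m = Suc n"
  define T where "T a = br (h a) (h (m - a))" for a
  have symT: "T (m - a) = T a" if "a \<le> m" for a
    unfolding T_def using that sym_odd[OF h_odd h_odd] by simp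
  have spl: "scale (of_nat m) (T a) = scale (of_nat a) (T a) + scale (of_nat (m - a)) (T a)"
    if "a \<le> m" for a
  proof -
    have "(of_nat m :: 'k) = of_nat a + of_nat (m - a)" using that by (simp flip: of_nat_add)
    then show ?thesis by (simp add: scale_left_distrib)
  qed
  have refl: "(\<Sum>a\<le>m. scale (of_nat (m - a)) (T a)) = (\<Sum>a\<le>m. scale (of_nat a) (T a))"
  proof -
    define g where "g a = scale (of_nat (m - a)) (T a)" for a
    have "(\<Sum>a\<le>m. g a) = (\<Sum>a\<le>m. g (m - a))" by (rule sum_refl[symmetric])
    also have "\<dots> = (\<Sum>a\<le>m. scale (of_nat a) (T a))"
      by (rule sum.cong) (simp_all add: g_def symT)
    finally show ?thesis by (simp add: g_def)
  qed
  have "scale (of_nat m) (\<Sum>a\<le>m. T a) = (\<Sum>a\<le>m. scale (of_nat m) (T a))" by (rule scale_sum_right)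
  also have "\<dots> = (\<Sum>a\<le>m. scale (of_nat a) (T a)) + (\<Sum>a\<le>m. scale (of_nat (m - a)) (T a))"
    by (simp add: spl sum.distrib)
  also have "\<dots> = scale 2 (\<Sum>a\<le>m. scale (of_nat a) (T a))" by (simp only: refl scale_two)
  also have "(\<Sum>a\<le>m. scale (of_nat a) (T a)) = (\<Sum>a<m. scale (of_nat (Suc a)) (T (Suc a)))"
    by (subst sum.atMost_shift) simp
  also have "\<dots> = (\<Sum>a\<le>n. br (scale (of_nat (Suc a)) (h (Suc a))) (h (n - a)))"
    by (simp add: m_def T_def br_scale2 lessThan_Suc_atMost)
  finally show ?thesis by (simp add: m_def T_def)
qed

lemma G_rec: "scale (of_nat (Suc n)) (GG s f (Suc n)) = br s (GG s f n)"
proof -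
  define Q where "Q = (\<Sum>a\<le>n. br (br s (h a)) (h (n - a)))"
  have dpart: "scale (of_nat (Suc n)) (d (h (Suc n))) = br (d s) (h n) + br s (d (h n))"
  proof -
    have "scale (of_nat (Suc n)) (d (h (Suc n))) = d (br s (h n) - (if n = 0 then d s else 0))"
      by (simp only: d_scale[symmetric] hh_rec)
    also have "\<dots> = br (d s) (h n) + br s (d (h n))"
      by (simp add: d_diff leib_even[OF s_even])
    finally show ?thesis .
  qed
  have bpart: "(\<Sum>a\<le>n. br (scale (of_nat (Suc a)) (h (Suc a))) (h (n - a))) = Q - br (d s) (h n)"
  proof -
    have "(\<Sum>a\<le>n. br (scale (of_nat (Suc a)) (h (Suc a))) (h (n - a)))
        = (\<Sum>a\<le>n. br (br s (h a)) (h (n - a)) - (if a = 0 then br (d s) (h n) else 0))"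
    proof (rule sum.cong[OF refl])
      fix a show "br (scale (of_nat (Suc a)) (h (Suc a))) (h (n - a)) =
         br (br s (h a)) (h (n - a)) - (if a = 0 then br (d s) (h n) else 0)"
        unfolding hh_rec br_diff2 by (cases "a = 0") simp_all
    qed
    also have "\<dots> = Q - br (d s) (h n)" by (simp add: Q_def sum_subtractf)
    finally show ?thesis .
  qed
  have lhs: "scale (of_nat (Suc n)) (GG s f (Suc n)) = br s (d (h n)) + Q"
  proof -
    have "scale (of_nat (Suc n)) (GG s f (Suc n)) = scale (of_nat (Suc n)) (d (h (Suc n)))
       + scale (1/2) (scale (of_nat (Suc n)) (\<Sum>a\<le>Suc n. br (h a) (h (Suc n - a))))"
      by (simp add: GG_def scale_right_distrib scale_left_commute[of "of_nat (Suc n)"])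
    also have "\<dots> = br (d s) (h n) + br s (d (h n)) + (Q - br (d s) (h n))"
      by (simp only: dpart S1 bpart scale_scale) simp
    also have "\<dots> = br s (d (h n)) + Q" by simp
    finally show ?thesis .
  qed
  have Q': "(\<Sum>a\<le>n. br (h a) (br s (h (n - a)))) = Q"
  proof -
    have "(\<Sum>a\<le>n. br (h a) (br s (h (n - a)))) = (\<Sum>a\<le>n. br (br s (h (n - a))) (h (n - (n - a))))"
      by (rule sum.cong) (simp_all add: sym_odd[OF h_odd bsh_odd])
    also have "\<dots> = Q" unfolding Q_def by (rule sum_refl[where g="\<lambda>a. br (br s (h a)) (h (n - a))"])
    finally show ?thesis .
  qed
  have rhs: "br s (GG s f n) = br s (d (h n)) + Q"
  proof -
    have "br s (GG s f n) = br s (d (h n)) + scale (1/2) (\<Sum>a\<le>n. br s (br (h a) (h (n - a))))"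
      by (simp add: GG_def br_add1 br_scale1 br_sum1)
    also have "(\<Sum>a\<le>n. br s (br (h a) (h (n - a)))) = Q + (\<Sum>a\<le>n. br (h a) (br s (h (n - a))))"
      by (simp add: jac_even[OF s_even] sum.distrib Q_def)
    finally show ?thesis by (simp only: Q' half_two)
  qed
  show ?thesis using lhs rhs by simp
qed

lemma G0: "GG s f 0 = curv f" by (simp add: GG_def curv_def hh0)

lemma G_vanish: assumes "br s (curv f) = 0" shows "GG s f (Suc n) = 0"
proof (induction n)
  case 0
  have "scale (of_nat (Suc 0)) (GG s f (Suc 0)) = 0" using G_rec[of 0] G0 assms by simp
  then show ?case by simp
next
  case (Suc n)
  have "scale (of_nat (Suc (Suc n))) (GG s f (Suc (Suc n))) = 0" using G_rec[of "Suc n"] Suc by simp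
  then show ?case by (simp del: of_nat_Suc)
qed

lemma curv_gauge: assumes "br s (curv f) = 0"
  shows "curv (gauge_act scale br d (Suc N) s f) = curv f"
proof -
  define M where "M = Suc N"
  have hz: "h k = 0" if "k > M" for k using hh_zero[OF s] that M_def by simp
  have fin: "finite {(i, j). i + j \<le> 2 * M}"
    by (rule finite_subset[of _ "{..2*M} \<times> {..2*M}"]) auto
  have sq: "br (\<Sum>a\<le>M. h a) (\<Sum>b\<le>M. h b) = (\<Sum>k\<le>2*M. \<Sum>a\<le>k. br (h a) (h (k - a)))"
  proof -
    have "br (\<Sum>a\<le>M. h a) (\<Sum>b\<le>M. h b) = (\<Sum>a\<le>M. \<Sum>b\<le>M. br (h a) (h b))"
      by (simp only: br_sum2) (simp only: br_sum1)
    also have "\<dots> = (\<Sum>(a,b)\<in>{..M} \<times> {..M}. br (h a) (h b))" by (rule sum.cartesian_product)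
    also have "\<dots> = (\<Sum>(a,b)\<in>{(i, j). i + j \<le> 2 * M}. br (h a) (h b))"
    proof (rule sum.mono_neutral_left[OF fin])
      show "{..M} \<times> {..M} \<subseteq> {(i, j). i + j \<le> 2 * M}" by auto
      show "\<forall>i\<in>{(i, j). i + j \<le> 2 * M} - {..M} \<times> {..M}. (case i of (a, b) \<Rightarrow> br (h a) (h b)) = 0"
      proof
        fix p assume "p \<in> {(i, j). i + j \<le> 2 * M} - {..M} \<times> {..M}"
        then obtain a b where p: "p = (a, b)" and ab: "M < a \<or> M < b" by (cases p) auto
        from ab show "(case p of (a, b) \<Rightarrow> br (h a) (h b)) = 0"
          unfolding p by (elim disjE) (simp_all add: hz)
      qed
    qed
    also have "\<dots> = (\<Sum>k\<le>2*M. \<Sum>a\<le>k. br (h a) (h (k - a)))" by (rule sum.triangle_reindex_eq)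
    finally show ?thesis .
  qed
  have dsum: "(\<Sum>a\<le>M. d (h a)) = (\<Sum>k\<le>2*M. d (h k))"
    by (rule sum.mono_neutral_left) (auto simp: hz)
  have "curv (gauge_act scale br d (Suc N) s f) = curv (\<Sum>a\<le>M. h a)" using gauge_sum[OF s] M_def by simp
  also have "\<dots> = (\<Sum>k\<le>2*M. GG s f k)"
    unfolding curv_def GG_def by (simp only: d_sum sq dsum sum.distrib scale_sum_right)
  also have "\<dots> = GG s f 0" by (subst sum.atMost_shift) (simp add: G_vanish[OF assms])
  also have "\<dots> = curv f" by (rule G0)
  finally show ?thesis .
qed

end
end


context DG begin

lemma Fil_mono: "a \<le> b \<Longrightarrow> x \<in> Fil a \<Longrightarrow> x \<in> Fil b"
  by (rule GP_mono) auto

lemma Fil_sub: "subspace (Fil m)" by (rule GP_subspace)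

lemma br_Fil: "x \<in> Fil a \<Longrightarrow> y \<in> Fil b \<Longrightarrow> br x y \<in> Fil (a + b)"
  by (rule br_GP) auto

lemma d_Fil: "x \<in> Fil a \<Longrightarrow> d x \<in> Fil (a + 1)"
  by (rule d_GP) auto

lemma pow_Fil2: assumes "s \<in> Fil (-2)" "x \<in> Fil b" shows "(br s ^^ n) x \<in> Fil b"
proof (induction n)
  case 0 then show ?case using assms by simp
next
  case (Suc n)
  have "br s ((br s ^^ n) x) \<in> Fil (-2 + b)" by (rule br_Fil[OF assms(1) Suc])
  then show ?case unfolding funpow.simps o_apply by (rule Fil_mono[rotated]) simp
qed

lemma pow_add: "(br s ^^ n) (x + y) = (br s ^^ n) x + (br s ^^ n) y"
  by (induction n) (simp_all add: br_add1)

lemma pow_diff_Fil: assumes "s \<in> Fil (-2)" "t \<in> Fil (- q)" "q \<ge> 2" "x \<in> Fil b"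
  shows "(br (s + t) ^^ n) x - (br s ^^ n) x \<in> Fil (b - q)"
proof (induction n)
  case 0 then show ?case using subspace_0[OF Fil_sub] by simp
next
  case (Suc n)
  have st: "s + t \<in> Fil (-2)"
    using subspace_add[OF Fil_sub assms(1) Fil_mono[OF _ assms(2)]] assms(3) by simp
  have e: "(br (s + t) ^^ Suc n) x - (br s ^^ Suc n) x
      = br s ((br (s + t) ^^ n) x - (br s ^^ n) x) + br t ((br (s + t) ^^ n) x)"
    by (simp add: br_add2 br_diff1)
  have 1: "br s ((br (s + t) ^^ n) x - (br s ^^ n) x) \<in> Fil (b - q)"
    by (rule Fil_mono[OF _ br_Fil[OF assms(1) Suc]]) simp
  have 2: "br t ((br (s + t) ^^ n) x) \<in> Fil (b - q)"
    by (rule Fil_mono[OF _ br_Fil[OF assms(2) pow_Fil2[OF st assms(4)]]]) simp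
  show ?case unfolding e by (rule subspace_add[OF Fil_sub 1 2])
qed

lemma gauge_diff: assumes s: "s \<in> ke" and t: "t \<in> ke" "t \<in> Fil (- q)" and q: "q \<ge> 2" and f: "f \<in> ko"
  shows "gauge_act scale br d (Suc N) (s + t) f - gauge_act scale br d (Suc N) s f + d t \<in> Fil (- q - 1)"
proof -
  define c where "c n = (1 / of_nat (fact n) :: 'k)" for n
  have sF: "s \<in> Fil (-2)" by (rule ke_Fil[OF s])
  have stF: "s + t \<in> Fil (-2)" by (rule ke_Fil[OF subspace_add[OF GP_subspace s t(1)]])
  have fF: "f \<in> Fil (-1)" by (rule ko_Fil[OF f])
  have dsF: "d s \<in> Fil (-1)" by (rule ko_Fil[OF d_ke[OF s]])
  have dtF: "d t \<in> Fil (- q + 1)" using d_Fil[OF t(2)] by simp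
  define P1 where "P1 = (\<Sum>n<Suc N. scale (c n) ((br (s + t) ^^ n) f - (br s ^^ n) f))"
  define P2 where "P2 = (\<Sum>n<Suc N. scale (c (Suc n)) ((br (s + t) ^^ n) (d s) - (br s ^^ n) (d s)))"
  define P3 where "P3 = (\<Sum>n<N. scale (c (Suc (Suc n))) ((br (s + t) ^^ Suc n) (d t)))"
  have pd1: "(br (s + t) ^^ n) f - (br s ^^ n) f \<in> Fil (- q - 1)" for n
    by (rule Fil_mono[OF _ pow_diff_Fil[OF sF t(2) q fF]]) simp
  have pd2: "(br (s + t) ^^ n) (d s) - (br s ^^ n) (d s) \<in> Fil (- q - 1)" for n
    by (rule Fil_mono[OF _ pow_diff_Fil[OF sF t(2) q dsF]]) simp
  have "P1 \<in> Fil (- q - 1)" unfolding P1_def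
    by (intro subspace_sum[OF Fil_sub] subspace_scale[OF Fil_sub] pd1)
  moreover have "P2 \<in> Fil (- q - 1)" unfolding P2_def
    by (intro subspace_sum[OF Fil_sub] subspace_scale[OF Fil_sub] pd2)
  moreover have "P3 \<in> Fil (- q - 1)" unfolding P3_def
  proof (intro subspace_sum[OF Fil_sub] subspace_scale[OF Fil_sub])
    fix n
    have "br (s + t) ((br (s + t) ^^ n) (d t)) \<in> Fil (-2 + (- q + 1))"
      by (rule br_Fil[OF stF pow_Fil2[OF stF dtF]])
    then show "(br (s + t) ^^ Suc n) (d t) \<in> Fil (- q - 1)"
      unfolding funpow.simps o_apply by (rule Fil_mono[rotated]) simp
  qed
  moreover have "gauge_act scale br d (Suc N) (s + t) f - gauge_act scale br d (Suc N) s f + d t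
      = P1 - (P2 + P3)"
  proof -
    have g1: "gauge_act scale br d (Suc N) (s + t) f = (\<Sum>n<Suc N. scale (c n) ((br (s + t) ^^ n) f))
       - ((\<Sum>n<Suc N. scale (c (Suc n)) ((br (s + t) ^^ n) (d s))) + (\<Sum>n<Suc N. scale (c (Suc n)) ((br (s + t) ^^ n) (d t))))"
      by (simp add: gauge_act_def c_def d_add pow_add scale_right_distrib sum.distrib)
    have g2: "gauge_act scale br d (Suc N) s f = (\<Sum>n<Suc N. scale (c n) ((br s ^^ n) f))
       - (\<Sum>n<Suc N. scale (c (Suc n)) ((br s ^^ n) (d s)))"
      by (simp add: gauge_act_def c_def)
    have g3: "(\<Sum>n<Suc N. scale (c (Suc n)) ((br (s + t) ^^ n) (d t))) = d t + P3"
      by (subst sum.lessThan_Suc_shift) (simp add: c_def P3_def)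
    have p1: "P1 = (\<Sum>n<Suc N. scale (c n) ((br (s + t) ^^ n) f)) - (\<Sum>n<Suc N. scale (c n) ((br s ^^ n) f))"
      by (simp add: P1_def scale_right_diff_distrib sum_subtractf)
    have p2: "P2 = (\<Sum>n<Suc N. scale (c (Suc n)) ((br (s + t) ^^ n) (d s))) - (\<Sum>n<Suc N. scale (c (Suc n)) ((br s ^^ n) (d s)))"
      by (simp add: P2_def scale_right_diff_distrib sum_subtractf)
    show ?thesis unfolding g1 g2 g3 p1 p2 by (simp add: algebra_simps)
  qed
  ultimately show ?thesis using subspace_diff[OF Fil_sub] subspace_add[OF Fil_sub] by metis
qed

end


context DG begin

lemma trunc_pi: "pi j (\<Sum>i\<in>R. if P i then pi i v else 0) = (if P j then pi j v else 0)"
proof -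
  have "pi j (\<Sum>i\<in>R. if P i then pi i v else 0) = (\<Sum>i\<in>R. if i = j \<and> P j then pi j v else 0)"
    by (simp only: pi_sum) (rule sum.cong, auto simp: pi_pi)
  also have "\<dots> = (if P j then pi j v else 0)"
    by (cases "j \<in> R") (auto simp: pi_out)
  finally show ?thesis .
qed

lemma curv_even: "x \<in> ko \<Longrightarrow> curv x \<in> GP even"
  unfolding curv_def
  by (intro subspace_add[OF GP_subspace] subspace_scale[OF GP_subspace] d_GP[of "\<lambda>i. i < 0 \<and> odd i"]
        br_GP[of "\<lambda>i. i < 0 \<and> odd i" "\<lambda>i. i < 0 \<and> odd i"]) auto

lemma bianchi: assumes x: "x \<in> GP odd" shows "d (curv x) = br (curv x) x"
proof -
  have dx: "d x \<in> GP even" by (rule d_GP[OF _ x]) auto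
  have xx: "br x x \<in> GP even" by (rule br_GP[OF _ x x]) auto
  have "d (curv x) = scale (1/2) (br (d x) x - br x (d x))"
    by (simp add: curv_def d_add d_scale leib_odd[OF x])
  also have "\<dots> = scale (1/2) (br (d x) x + br (d x) x)" by (simp add: anti_even[OF dx])
  also have "\<dots> = br (d x) x" by (rule half_two)
  finally have 1: "d (curv x) = br (d x) x" .
  have "br (br x x) x = - br x (br x x)" using anti_even[OF xx, of x] by simp
  then have "br (br x x) x = 0" using triple_odd[OF x] by simp
  then have "br (curv x) x = br (d x) x" by (simp add: curv_def br_add2 br_scale2)
  with 1 show ?thesis by simp
qed

context
  fixes L X
  assumes L_sub: "subspace L"
    and L_graded: "L = span (\<Union>i. L \<inter> K i)"
    and L_center: "L \<subseteq> center br"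
    and L_closed: "\<forall>x\<in>L. d x = 0"
    and L_qis: "quasi_iso_incl scale K d L"
    and X_center: "X \<in> center br"
    and X_even: "X \<in> GP even"
    and X_closed: "d X = 0"
begin

lemma L_span: assumes "subspace T" "\<And>l i. l \<in> L \<Longrightarrow> l \<in> K i \<Longrightarrow> l \<in> T" shows "L \<subseteq> T"
proof -
  have "span (\<Union>i. L \<inter> K i) \<subseteq> T" by (rule span_minimal) (use assms in auto)
  then show ?thesis by (simp only: L_graded[symmetric])
qed

lemma Lc: "l \<in> L \<Longrightarrow> br l y = 0" using L_center by (auto simp: center_def)
lemma Xc: "br X y = 0" using X_center by (auto simp: center_def)
lemma Xc2: "br y X = 0" using anti_even[OF X_even, of y] Xc by simp
lemma Ld: "l \<in> L \<Longrightarrow> d l = 0" using L_closed by blast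

lemma Lc2: assumes "l \<in> L" shows "br y l = 0"
proof -
  have "L \<subseteq> {l. \<forall>y. br y l = 0}"
  proof (rule L_span)
    show "subspace {l. \<forall>y. br y l = 0}" by (rule subspaceI) (auto simp: br_add1 br_scale1)
  next
    fix l i assume l: "l \<in> L" "l \<in> K i"
    show "l \<in> {l. \<forall>y. br y l = 0}"
    proof (intro CollectI allI)
      fix y
      have "br y l = (\<Sum>j\<in>R. br (pi j y) l)" by (rule dec_l)
      also have "\<dots> = (\<Sum>j\<in>R. 0)"
        by (rule sum.cong[OF refl]) (simp add: br_anti[OF pi_K l(2)] Lc[OF l(1)])
      finally show "br y l = 0" by simp
    qed
  qed
  then show ?thesis using assms by blast
qed

lemma L_pi: assumes "l \<in> L" shows "pi i l \<in> L"
proof -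
  have "L \<subseteq> {v. \<forall>i. pi i v \<in> L}"
  proof (rule L_span)
    show "subspace {v. \<forall>i. pi i v \<in> L}"
      by (rule subspaceI) (auto simp: pi_add pi_scale L_sub subspace_add subspace_scale subspace_0)
  next
    fix l j assume "l \<in> L" "l \<in> K j"
    then show "l \<in> {v. \<forall>i. pi i v \<in> L}" by (auto simp: pi_K_single subspace_0[OF L_sub])
  qed
  then show ?thesis using assms by blast
qed

lemma L_of_pi: assumes "\<And>i. pi i v \<in> L" shows "v \<in> L"
proof -
  have "(\<Sum>i\<in>R. pi i v) \<in> L" by (rule subspace_sum[OF L_sub assms])
  then show ?thesis by (simp only: decomp_sum[symmetric])
qed

lemma curv_addL: assumes "l \<in> L" shows "curv (x + l) = curv x"
  by (simp add: curv_def d_add Ld[OF assms] br_add1 br_add2 Lc[OF assms] Lc2[OF assms])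

definition "SS = {f \<in> ko. curv f - X \<in> L}"

lemma memb: assumes f: "f \<in> SS" and s: "s \<in> ke" and l: "l \<in> L \<inter> ko"
  shows "gauge_act scale br d (Suc N) s f + l \<in> SS"
proof -
  have fk: "f \<in> ko" and fL: "curv f - X \<in> L" using f by (auto simp: SS_def)
  have "br s (curv f) = br s (X + (curv f - X))" by simp
  also have "\<dots> = 0" by (simp only: br_add1 Xc2 Lc2[OF fL]) simp
  finally have z: "br s (curv f) = 0" .
  have "gauge_act scale br d (Suc N) s f \<in> ko"
    unfolding gauge_sum[OF s] by (rule subspace_sum[OF GP_subspace hh_ko[OF s fk]])
  then have "gauge_act scale br d (Suc N) s f + l \<in> ko" using l subspace_add[OF GP_subspace] by blast
  moreover have "curv (gauge_act scale br d (Suc N) s f + l) = curv f"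
    using curv_addL l curv_gauge[OF s fk z] by simp
  ultimately show ?thesis using fL by (simp add: SS_def)
qed


lemma qis_inj: "x \<in> L \<Longrightarrow> x \<in> K i \<Longrightarrow> x \<in> d ` K (i - 1) \<Longrightarrow> x = 0"
  using L_qis unfolding quasi_iso_incl_def by blast
lemma qis_surj: "y \<in> K i \<Longrightarrow> d y = 0 \<Longrightarrow> \<exists>x \<in> L \<inter> K i. y - x \<in> d ` K (i - 1)"
  using L_qis unfolding quasi_iso_incl_def by blast

lemma odd_pred: "even (a::int) \<Longrightarrow> odd (a - 1)" by simp

lemma exist_step: assumes f: "f \<in> ko" and a: "a \<le> 0" "even a"
  and hyp: "\<forall>j. j > a \<longrightarrow> pi j (curv f - X) \<in> L"
  shows "\<exists>f'\<in>ko. \<forall>j. j > a - 2 \<longrightarrow> pi j (curv f' - X) \<in> L"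
proof -
  define P where "P = curv f - X"
  define Ph where "Ph = (\<Sum>i\<in>R. if i > a then pi i P else 0)"
  define Pl where "Pl = P - Ph"
  have Ph_L: "Ph \<in> L" unfolding Ph_def
    by (rule subspace_sum[OF L_sub]) (use hyp subspace_0[OF L_sub] in \<open>auto simp: P_def\<close>)
  have Pl_F: "Pl \<in> Fil a"
    unfolding GP_def Pl_def Ph_def by (auto simp: pi_diff trunc_pi)
  have Peven: "P \<in> GP even" unfolding P_def
    by (rule subspace_diff[OF GP_subspace curv_even[OF f] X_even])
  have dP: "d P = br Pl f"
  proof -
    have "d P = br (curv f) f" by (simp add: P_def d_diff X_closed bianchi[OF ko_odd[OF f]])
    also have "\<dots> = br (Ph + Pl + X) f" by (simp add: Pl_def P_def)
    also have "\<dots> = br Pl f" by (simp add: br_add2 Lc[OF Ph_L] Xc)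
    finally show ?thesis .
  qed
  have brF: "br Pl f \<in> Fil (a - 1)"
    by (rule Fil_mono[OF _ br_Fil[OF Pl_F ko_Fil[OF f]]]) simp
  define R0 where "R0 = pi a P"
  have "d R0 = pi (a + 1) (d P)" by (simp add: R0_def pi_d)
  also have "\<dots> = 0" unfolding dP by (rule GP_piI[OF brF]) simp
  finally have dR0: "d R0 = 0" .
  obtain x where x: "x \<in> L" "x \<in> K a" and "R0 - x \<in> d ` K (a - 1)"
    using qis_surj[OF pi_K dR0[unfolded R0_def]] R0_def by blast
  then obtain y where y: "y \<in> K (a - 1)" and Rxy: "R0 - x = d y" by auto
  have yko: "y \<in> ko" by (rule subsetD[OF K_GP y]) (use a in simp)
  have yF: "y \<in> Fil (a - 1)" by (rule subsetD[OF K_GP y]) simp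
  have dyK: "d y \<in> K a" using d_deg[OF y] by simp
  define B where "B = scale (1/2) (br y y - br f y - br y f)"
  have BF: "B \<in> Fil (a - 2)" unfolding B_def
  proof (intro subspace_scale[OF Fil_sub] subspace_diff[OF Fil_sub])
    show "br y y \<in> Fil (a - 2)" by (rule Fil_mono[OF _ br_Fil[OF yF yF]]) (use a in simp)
    show "br f y \<in> Fil (a - 2)" by (rule Fil_mono[OF _ br_Fil[OF ko_Fil[OF f] yF]]) simp
    show "br y f \<in> Fil (a - 2)" by (rule Fil_mono[OF _ br_Fil[OF yF ko_Fil[OF f]]]) simp
  qed
  have cf: "curv (f - y) - X = P - d y + B"
    by (simp add: P_def B_def curv_def d_diff br_diff1 br_diff2 scale_right_diff_distrib
        scale_right_distrib algebra_simps)
  show ?thesis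
  proof (intro bexI allI impI)
    show "f - y \<in> ko" by (rule subspace_diff[OF GP_subspace f yko])
    fix j assume j: "a - 2 < j"
    have pB: "pi j B = 0" by (rule GP_piI[OF BF]) (use j in simp)
    have pdy: "pi j (d y) = (if j = a then d y else 0)" by (rule pi_K_single[OF dyK])
    show "pi j (curv (f - y) - X) \<in> L"
    proof (cases "j = a")
      case True
      have "pi j (curv (f - y) - X) = pi j P - pi j (d y) + pi j B" by (simp add: cf pi_add pi_diff)
      also have "\<dots> = R0 - d y" using True pB pdy by (simp add: R0_def)
      also have "\<dots> = x" using Rxy by (simp add: algebra_simps)
      finally have "pi j (curv (f - y) - X) = x" .
      then show ?thesis using x by simp
    next
      case False
      then have e: "pi j (curv (f - y) - X) = pi j P" by (simp add: cf pi_add pi_diff pB pdy)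
      show ?thesis
      proof (cases "j = a - 1")
        case True
        then have "pi j P = 0" using GP_piI[OF Peven] a by simp
        then show ?thesis using e subspace_0[OF L_sub] by simp
      next
        case False
        then have "j > a" using j \<open>j \<noteq> a\<close> by simp
        then show ?thesis using e hyp by (simp add: P_def)
      qed
    qed
  qed
qed

lemma exist: "\<exists>f\<in>ko. curv f - X \<in> L"
proof -
  have "\<exists>f\<in>ko. \<forall>j. j > - 2 * int m \<longrightarrow> pi j (curv f - X) \<in> L" for m
  proof (induction m)
    case 0
    have "pi j (curv 0 - X) \<in> L" if "j > 0" for j
      using that pi_out[of j] subspace_0[OF L_sub] by simp
    then show ?case using subspace_0[OF GP_subspace] by auto
  next
    case (Suc m)
    then obtain f where "f \<in> ko" "\<forall>j. j > - 2 * int m \<longrightarrow> pi j (curv f - X) \<in> L" by blast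
    from exist_step[OF this(1) _ _ this(2)] obtain f' where f': "f' \<in> ko"
      and h': "\<forall>j. j > - 2 * int m - 2 \<longrightarrow> pi j (curv f' - X) \<in> L" by auto
    show ?case
    proof (rule bexI[OF _ f'], intro allI impI)
      fix j assume "j > - 2 * int (Suc m)"
      then have "j > - 2 * int m - 2" by simp
      then show "pi j (curv f' - X) \<in> L" using h' by blast
    qed
  qed
  from this[of "Suc N"] obtain f where f: "f \<in> ko" and h: "\<forall>j. j > - 2 * int (Suc N) \<longrightarrow> pi j (curv f - X) \<in> L"
    by blast
  have "pi j (curv f - X) \<in> L" for j
  proof (cases "j > - 2 * int (Suc N)")
    case True then show ?thesis using h by blast
  next
    case False then show ?thesis using pi_out[of j] subspace_0[OF L_sub] by simp
  qed
  then show ?thesis using f L_of_pi by blast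
qed


lemma trans_step: assumes f: "f \<in> SS" and g: "g \<in> SS" and s: "s \<in> ke" and l: "l \<in> L \<inter> ko"
  and a: "a \<le> 0" "even a"
  and hyp: "\<forall>j. j > a \<longrightarrow> pi j (g - (gauge_act scale br d (Suc N) s f + l)) = 0"
  shows "\<exists>s'\<in>ke. \<exists>l'\<in>L \<inter> ko. \<forall>j. j > a - 2 \<longrightarrow> pi j (g - (gauge_act scale br d (Suc N) s' f + l')) = 0"
proof -
  define h where "h = gauge_act scale br d (Suc N) s f + l"
  have hS: "h \<in> SS" unfolding h_def by (rule memb[OF f s l])
  have fk: "f \<in> ko" using f by (simp add: SS_def)
  have hk: "h \<in> ko" and hL: "curv h - X \<in> L" using hS by (auto simp: SS_def)
  have gk: "g \<in> ko" and gL: "curv g - X \<in> L" using g by (auto simp: SS_def)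
  define e where "e = g - h"
  have ek: "e \<in> ko" unfolding e_def by (rule subspace_diff[OF GP_subspace gk hk])
  have eF: "e \<in> Fil (a - 1)"
    unfolding GP_def
  proof (intro CollectI allI impI)
    fix i assume "\<not> i \<le> a - 1"
    then have "i > a \<or> i = a" by auto
    then show "pi i e = 0"
    proof
      assume "i > a" then show ?thesis using hyp by (simp add: e_def h_def)
    next
      assume "i = a" then show ?thesis using GP_piI[OF ek] a by simp
    qed
  qed
  define D where "D = pi (a - 1) e"
  have DK: "D \<in> K (a - 1)" unfolding D_def by (rule pi_K)
  define B where "B = scale (1/2) (br e g + br h e)"
  have cdiff: "curv g - curv h = d e + B"
    by (simp add: B_def e_def curv_def d_diff br_diff1 br_diff2 scale_right_diff_distrib
        scale_right_distrib algebra_simps flip: scale_right_distrib)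
  have BF: "B \<in> Fil (a - 2)" unfolding B_def
  proof (intro subspace_scale[OF Fil_sub] subspace_add[OF Fil_sub])
    show "br e g \<in> Fil (a - 2)" by (rule Fil_mono[OF _ br_Fil[OF eF ko_Fil[OF gk]]]) simp
    show "br h e \<in> Fil (a - 2)" by (rule Fil_mono[OF _ br_Fil[OF ko_Fil[OF hk] eF]]) simp
  qed
  have cL: "curv g - curv h \<in> L"
    using subspace_diff[OF L_sub gL hL] by simp
  have "pi a (curv g - curv h) = pi (a - 1 + 1) (d e)"
    using GP_piI[OF BF, of a] by (simp add: cdiff pi_add)
  also have "\<dots> = d D" unfolding D_def by (rule pi_d)
  finally have dD: "d D = pi a (curv g - curv h)" by simp
  have dDL: "d D \<in> L" unfolding dD by (rule L_pi[OF cL])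
  have dDK: "d D \<in> K a" using d_deg[OF DK] by simp
  have "d D = 0" by (rule qis_inj[OF dDL dDK]) (use DK in auto)
  then obtain x where x: "x \<in> L" "x \<in> K (a - 1)" and "D - x \<in> d ` K (a - 1 - 1)"
    using qis_surj[OF DK] by blast
  then obtain y where y: "y \<in> K (a - 2)" and Dxy: "D - x = d y" by auto
  define t where "t = - y"
  have tK: "t \<in> K (a - 2)" unfolding t_def using subspace_neg[OF subK y] .
  have tke: "t \<in> ke" by (rule subsetD[OF K_GP tK]) (use a in simp)
  have tF: "t \<in> Fil (- (2 - a))" by (rule subsetD[OF K_GP tK]) simp
  have xko: "x \<in> ko" by (rule subsetD[OF K_GP x(2)]) (use a in simp)
  define r where "r = gauge_act scale br d (Suc N) (s + t) f - gauge_act scale br d (Suc N) s f + d t"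
  have rF: "r \<in> Fil (- (2 - a) - 1)" unfolding r_def by (rule gauge_diff[OF s tke tF _ fk]) (use a in simp)
  have dyK: "d y \<in> K (a - 1)" using d_deg[OF y] by simp
  show ?thesis
  proof (intro bexI allI impI)
    show "s + t \<in> ke" by (rule subspace_add[OF GP_subspace s tke])
    show "l + x \<in> L \<inter> ko" using l x xko subspace_add[OF L_sub] subspace_add[OF GP_subspace] by blast
    fix j assume j: "a - 2 < j"
    have eq: "g - (gauge_act scale br d (Suc N) (s + t) f + (l + x)) = e - d y - r - x"
      by (simp add: e_def h_def r_def t_def d_neg algebra_simps)
    have pr: "pi j r = 0" by (rule GP_piI[OF rF]) (use j in simp)
    have pdy: "pi j (d y) = (if j = a - 1 then d y else 0)" by (rule pi_K_single[OF dyK])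
    have px: "pi j x = (if j = a - 1 then x else 0)" by (rule pi_K_single[OF x(2)])
    show "pi j (g - (gauge_act scale br d (Suc N) (s + t) f + (l + x))) = 0"
    proof (cases "j = a - 1")
      case True
      have "pi j (e - d y - r - x) = pi j e - pi j (d y) - pi j r - pi j x" by (simp add: pi_diff)
      also have "\<dots> = D - d y - x" using True pr pdy px by (simp add: D_def)
      also have "\<dots> = 0" using Dxy by (simp add: algebra_simps)
      finally show ?thesis unfolding eq .
    next
      case False
      then have "j > a - 1" using j by simp
      then have pe: "pi j e = 0" using GP_piI[OF eF] by simp
      have "pi j (e - d y - r - x) = pi j e - pi j (d y) - pi j r - pi j x" by (simp add: pi_diff)
      also have "\<dots> = 0" using False pe pr pdy px by simp
      finally show ?thesis unfolding eq .
    qed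
  qed
qed

lemma transitive: assumes f: "f \<in> SS" and g: "g \<in> SS"
  shows "\<exists>s\<in>ke. \<exists>l\<in>L \<inter> ko. g = gauge_act scale br d (Suc N) s f + l"
proof -
  have "\<exists>s\<in>ke. \<exists>l\<in>L \<inter> ko. \<forall>j. j > - 2 * int m \<longrightarrow> pi j (g - (gauge_act scale br d (Suc N) s f + l)) = 0" for m
  proof (induction m)
    case 0
    have "0 \<in> ke" "0 \<in> L \<inter> ko" using subspace_0[OF GP_subspace] subspace_0[OF L_sub] by auto
    then show ?case using pi_out by fastforce
  next
    case (Suc m)
    then obtain s l where sl: "s \<in> ke" "l \<in> L \<inter> ko"
      "\<forall>j. j > - 2 * int m \<longrightarrow> pi j (g - (gauge_act scale br d (Suc N) s f + l)) = 0" by blast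
    from trans_step[OF f g sl(1,2) _ _ sl(3)] obtain s' l' where s'l': "s' \<in> ke" "l' \<in> L \<inter> ko"
      "\<forall>j. j > - 2 * int m - 2 \<longrightarrow> pi j (g - (gauge_act scale br d (Suc N) s' f + l')) = 0" by auto
    show ?case
    proof (intro bexI[OF _ s'l'(1)] bexI[OF _ s'l'(2)] allI impI)
      fix j assume "j > - 2 * int (Suc m)"
      then have "j > - 2 * int m - 2" by simp
      then show "pi j (g - (gauge_act scale br d (Suc N) s' f + l')) = 0" using s'l'(3) by blast
    qed
  qed
  from this[of "Suc N"] obtain s l where sl: "s \<in> ke" "l \<in> L \<inter> ko"
    and h: "\<forall>j. j > - 2 * int (Suc N) \<longrightarrow> pi j (g - (gauge_act scale br d (Suc N) s f + l)) = 0"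
    by blast
  have "g - (gauge_act scale br d (Suc N) s f + l) = 0"
  proof (rule pi_ext)
    fix j show "pi j (g - (gauge_act scale br d (Suc N) s f + l)) = pi j 0"
    proof (cases "j > - 2 * int (Suc N)")
      case True then show ?thesis using h by simp
    next
      case False then show ?thesis using pi_out[of j] by simp
    qed
  qed
  then show ?thesis using sl by auto
qed

lemma curv_orbit: assumes f: "f \<in> SS" and s: "s \<in> ke" and l: "l \<in> L \<inter> ko"
  shows "curv (gauge_act scale br d (Suc N) s f + l) = curv f"
proof -
  have fk: "f \<in> ko" and fL: "curv f - X \<in> L" using f by (auto simp: SS_def)
  have "br s (curv f) = br s (X + (curv f - X))" by simp
  also have "\<dots> = 0" by (simp only: br_add1 Xc2 Lc2[OF fL]) simp
  finally have z: "br s (curv f) = 0" .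
  show ?thesis using curv_addL l curv_gauge[OF s fk z] by simp
qed

end
end

theorem theorem3p8:
  fixes scale :: "'k::field_char_0 \<Rightarrow> 'v::ab_group_add \<Rightarrow> 'v"
    and K :: "int \<Rightarrow> 'v set" and N :: nat
    and br :: "'v \<Rightarrow> 'v \<Rightarrow> 'v" and d :: "'v \<Rightarrow> 'v"
    and L :: "'v set" and X :: "'v"
  assumes dg: "dgla scale K N br d"
    and L_sub: "module.subspace scale L"
    and L_graded: "L = module.span scale (\<Union>i. L \<inter> K i)"
    and L_center: "L \<subseteq> center br"
    and L_closed: "\<forall>x\<in>L. d x = 0"
    and L_qis: "quasi_iso_incl scale K d L"
    and X_center: "X \<in> center br"
    and X_even: "X \<in> graded_part scale K even"
    and X_closed: "d X = 0"
  defines "kodd \<equiv> graded_part scale K (\<lambda>i. i < 0 \<and> odd i)"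
    and "keven \<equiv> graded_part scale K (\<lambda>i. i < 0 \<and> even i)"
    and "lodd \<equiv> L \<inter> graded_part scale K (\<lambda>i. i < 0 \<and> odd i)"
    and "S \<equiv> {f \<in> graded_part scale K (\<lambda>i. i < 0 \<and> odd i).
               d f + scale (1/2) (br f f) - X \<in> L}"
  shows "(S \<noteq> {}
          \<and> (\<forall>s\<in>keven. \<forall>l\<in>lodd. \<forall>f\<in>S. gauge_act scale br d (Suc N) s f + l \<in> S)
          \<and> (\<forall>f\<in>S. \<forall>g\<in>S. \<exists>s\<in>keven. \<exists>l\<in>lodd. g = gauge_act scale br d (Suc N) s f + l))
         \<and> (\<forall>f\<in>S. \<forall>g\<in>S. d f + scale (1/2) (br f f) - X = d g + scale (1/2) (br g g) - X)"
proof -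
  interpret DG scale K N br d by unfold_locales (rule dg)
  have Xe: "X \<in> GP even" using X_even by (simp add: GP_eq)
  note ctx = L_sub L_graded L_center L_closed L_qis X_center Xe X_closed
  have kodd: "kodd = ko" by (simp add: kodd_def GP_eq)
  have keven: "keven = ke" by (simp add: keven_def GP_eq)
  have lodd: "lodd = L \<inter> ko" by (simp add: lodd_def GP_eq)
  have S: "S = SS L X" by (simp add: S_def SS_def[OF ctx] curv_def GP_eq)
  have cv: "d f + scale (1/2) (br f f) = curv f" for f by (simp add: curv_def)
  show ?thesis
    unfolding keven lodd S cv
  proof (intro conjI ballI)
    show "SS L X \<noteq> {}" using exist[OF ctx] by (auto simp: SS_def[OF ctx])
  next
    fix s l f assume "s \<in> ke" "l \<in> L \<inter> ko" "f \<in> SS L X"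
    then show "gauge_act scale br d (Suc N) s f + l \<in> SS L X" using memb[OF ctx] by blast
  next
    fix f g assume "f \<in> SS L X" "g \<in> SS L X"
    then show "\<exists>s\<in>ke. \<exists>l\<in>L \<inter> ko. g = gauge_act scale br d (Suc N) s f + l"
      using transitive[OF ctx] by blast
  next
    fix f g assume f: "f \<in> SS L X" and g: "g \<in> SS L X"
    then obtain s l where "s \<in> ke" "l \<in> L \<inter> ko" "g = gauge_act scale br d (Suc N) s f + l"
      using transitive[OF ctx] by blast
    then show "curv f - X = curv g - X" using curv_orbit[OF ctx f] by simp
  qed
qed

end
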